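(* In the setting and notation of the context, for every $t\in\{1,\dots,n-1\}$, $$\textsf{ALG}_{t+1}\ \ge\ \beta_t\ \ge\ \frac{1}{\phi^2}\mathbb{E}[y_t]\ =\ \frac1\phi\,\alpha_t,$$ where $\textsf{ALG}_{t+1}$ is the expected value accepted by $\textsf{ALG}$ when run only on boxes $t+1,\dots,n$ (arriving in this order).
   Context: There are $n$ boxes arriving in order $1,2,\dots,n$; box $s$ contains an independent nonnegative value $v_s\sim F_s$ with finite expectation. $\phi=\frac{1+\sqrt5}{2}$. For each $t$, $y_t=\max_{s>t}v_s$ ($y_n=0$), $\alpha_t=\frac1\phi\mathbb{E}[y_t]$, and $\beta_t$ is the unique $x\ge0$ solving $\mathbb{E}[(y_t-\phi x)^+]=x$ (so $\alpha_n=\beta_n=0$). The algorithm $\textsf{ALG}$ scans the boxes in arrival order and accepts (and stops at) the first box $t$ whose realized value $\theta_t$ satisfies $\theta_t\ge\tau_t:=\max(\alpha_t,\beta_t)$; it receives $0$ if it accepts nothing. When $\textsf{ALG}$ is run only on boxes $t+1,\dots,n$, it uses the same thresholds $\tau_{t+1},\dots,\tau_n$. *)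

theory Defs
  imports "HOL-Probability.Probability"
begin

text \<open>Boxes are indexed 1..n; box s has value distribution F s (a probability
measure on the reals).\<close>

definition phi :: real where
  "phi = (1 + sqrt 5) / 2"

definition joint :: "(nat \<Rightarrow> real measure) \<Rightarrow> nat \<Rightarrow> (nat \<Rightarrow> real) measure" where
  "joint F n = PiM {1..n} F"

definition ymax :: "nat \<Rightarrow> nat \<Rightarrow> (nat \<Rightarrow> real) \<Rightarrow> real" where
  "ymax n t \<omega> = (if {t<..n} = {} then 0 else Max (\<omega> ` {t<..n}))"

definition Ey :: "(nat \<Rightarrow> real measure) \<Rightarrow> nat \<Rightarrow> nat \<Rightarrow> real" where
  "Ey F n t = (\<integral>\<omega>. ymax n t \<omega> \<partial>joint F n)"

definition alpha :: "(nat \<Rightarrow> real measure) \<Rightarrow> nat \<Rightarrow> nat \<Rightarrow> real" where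
  "alpha F n t = Ey F n t / phi"

definition beta :: "(nat \<Rightarrow> real measure) \<Rightarrow> nat \<Rightarrow> nat \<Rightarrow> real" where
  "beta F n t = (THE x. 0 \<le> x \<and>
      (\<integral>\<omega>. max 0 (ymax n t \<omega> - phi * x) \<partial>joint F n) = x)"

definition tau :: "(nat \<Rightarrow> real measure) \<Rightarrow> nat \<Rightarrow> nat \<Rightarrow> real" where
  "tau F n t = max (alpha F n t) (beta F n t)"

definition alg_reward :: "(nat \<Rightarrow> real measure) \<Rightarrow> nat \<Rightarrow> nat \<Rightarrow> (nat \<Rightarrow> real) \<Rightarrow> real" where
  "alg_reward F n t \<omega> =
     (if \<exists>s\<in>{t..n}. tau F n s \<le> \<omega> s
      then \<omega> (LEAST s. s \<in> {t..n} \<and> tau F n s \<le> \<omega> s) else 0)"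

definition ALG :: "(nat \<Rightarrow> real measure) \<Rightarrow> nat \<Rightarrow> nat \<Rightarrow> real" where
  "ALG F n t = (\<integral>\<omega>. alg_reward F n t \<omega> \<partial>joint F n)"

end

theory Submission
  imports Defs
begin

lemma phi_sq: "phi\<^sup>2 = phi + 1"
  unfolding phi_def by (simp add: power2_eq_square field_simps)

lemma phi_ge1: "phi \<ge> 1"
proof -
  have "sqrt 5 \<ge> 1" by simp
  then show ?thesis unfolding phi_def by simp
qed

lemma alg_gt: "n < k \<Longrightarrow> alg_reward F n k \<omega> = 0"
  unfolding alg_reward_def by auto

lemma alg_rec: assumes "k \<le> n"
  shows "alg_reward F n k \<omega> = (if tau F n k \<le> \<omega> k then \<omega> k else alg_reward F n (Suc k) \<omega>)"
proof (cases "tau F n k \<le> \<omega> k")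
  case True
  have "(LEAST s. s \<in> {k..n} \<and> tau F n s \<le> \<omega> s) = k"
    by (rule Least_equality) (use True assms in auto)
  then show ?thesis using True assms unfolding alg_reward_def by auto
next
  case False
  have pt: "(s \<in> {k..n} \<and> tau F n s \<le> \<omega> s) = (s \<in> {Suc k..n} \<and> tau F n s \<le> \<omega> s)" for s
  proof (cases "s = k")
    case True then show ?thesis using False by simp
  next
    case False then show ?thesis by auto
  qed
  have e: "(\<exists>s\<in>{k..n}. tau F n s \<le> \<omega> s) = (\<exists>s\<in>{Suc k..n}. tau F n s \<le> \<omega> s)"
    using pt by blast
  have l: "(\<lambda>s. s \<in> {k..n} \<and> tau F n s \<le> \<omega> s) = (\<lambda>s. s \<in> {Suc k..n} \<and> tau F n s \<le> \<omega> s)"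
    using pt by blast
  show ?thesis using False unfolding alg_reward_def e l by simp
qed

lemma alg_meas:
  assumes "\<And>s. s \<in> {k..n} \<Longrightarrow> (\<lambda>\<omega>. \<omega> s) \<in> borel_measurable N"
  shows "alg_reward F n k \<in> borel_measurable N"
  using assms
proof (induction "Suc n - k" arbitrary: k)
  case 0
  then have "n < k" by simp
  then show ?case by (simp add: alg_gt[of n k])
next
  case (Suc d)
  then have kn: "k \<le> n" by simp
  have m1: "(\<lambda>\<omega>. \<omega> k) \<in> borel_measurable N" using Suc.prems kn by simp
  have m2: "alg_reward F n (Suc k) \<in> borel_measurable N"
    using Suc by simp
  have "alg_reward F n k = (\<lambda>\<omega>. if tau F n k \<le> \<omega> k then \<omega> k else alg_reward F n (Suc k) \<omega>)"
    using alg_rec[OF kn] by auto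
  also have "\<dots> \<in> borel_measurable N"
    using m1 m2 by measurable
  finally show ?case .
qed

lemma alg_local:
  assumes "\<And>s. s \<in> {k..n} \<Longrightarrow> \<omega> s = \<omega>' s"
  shows "alg_reward F n k \<omega> = alg_reward F n k \<omega>'"
  using assms
proof (induction "Suc n - k" arbitrary: k)
  case 0
  then show ?case by (simp add: alg_gt)
next
  case (Suc d)
  then have kn: "k \<le> n" by simp
  show ?case using Suc kn by (simp add: alg_rec[OF kn])
qed

lemma alg_bound: "\<bar>alg_reward F n k \<omega>\<bar> \<le> (\<Sum>s\<in>{k..n}. \<bar>\<omega> s\<bar>)"
proof (induction "Suc n - k" arbitrary: k)
  case 0
  then show ?case by (simp add: alg_gt)
next
  case (Suc d)
  then have kn: "k \<le> n" by simp
  have sp: "{k..n} = insert k {Suc k..n}" using kn by auto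
  have "(\<Sum>s\<in>{k..n}. \<bar>\<omega> s\<bar>) = \<bar>\<omega> k\<bar> + (\<Sum>s\<in>{Suc k..n}. \<bar>\<omega> s\<bar>)"
    unfolding sp by simp
  moreover have "\<bar>alg_reward F n (Suc k) \<omega>\<bar> \<le> (\<Sum>s\<in>{Suc k..n}. \<bar>\<omega> s\<bar>)" using Suc by simp
  moreover have "0 \<le> (\<Sum>s\<in>{Suc k..n}. \<bar>\<omega> s\<bar>)" by (simp add: sum_nonneg)
  moreover have "0 \<le> \<bar>\<omega> k\<bar>" by simp
  ultimately show ?case by (cases "tau F n k \<le> \<omega> k") (simp_all add: alg_rec[OF kn])
qed

lemma ymax_bound: "\<bar>ymax n k \<omega>\<bar> \<le> (\<Sum>s\<in>{k<..n}. \<bar>\<omega> s\<bar>)"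
proof (cases "{k<..n} = {}")
  case True then show ?thesis by (simp add: ymax_def)
next
  case False
  have "Max (\<omega> ` {k<..n}) \<in> \<omega> ` {k<..n}" using False by (intro Max_in) auto
  then obtain s where s0: "s \<in> {k<..n}" "Max (\<omega> ` {k<..n}) = \<omega> s" by blast
  then have s: "s \<in> {k<..n}" "ymax n k \<omega> = \<omega> s" using False by (auto simp: ymax_def)
  have "\<bar>\<omega> s\<bar> \<le> (\<Sum>s\<in>{k<..n}. \<bar>\<omega> s\<bar>)"
    by (rule member_le_sum) (use s in auto)
  then show ?thesis using s by simp
qed

lemma ymax_meas:
  assumes "\<And>s. s \<in> {k<..n} \<Longrightarrow> (\<lambda>\<omega>. \<omega> s) \<in> borel_measurable N"
  shows "ymax n k \<in> borel_measurable N"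
proof (cases "{k<..n} = {}")
  case True then show ?thesis by (simp add: ymax_def[abs_def])
next
  case False
  have "(\<lambda>\<omega>. Max ((\<lambda>s. \<omega> s) ` {k<..n})) \<in> borel_measurable N"
    by (rule borel_measurable_Max) (use assms in auto)
  then show ?thesis using False by (simp add: ymax_def[abs_def])
qed

lemma ymax_nonneg: "(\<forall>s\<in>{k<..n}. 0 \<le> \<omega> s) \<Longrightarrow> 0 \<le> ymax n k \<omega>"
  unfolding ymax_def by (auto simp: Max_ge_iff)

lemma ymax_step:
  assumes "k < n" "\<forall>s\<in>{k<..n}. 0 \<le> \<omega> s"
  shows "ymax n (Suc k) \<omega> \<le> ymax n k \<omega>" "ymax n k \<omega> \<le> max (\<omega> (Suc k)) (ymax n (Suc k) \<omega>)"
proof -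
  have sp: "{k<..n} = insert (Suc k) {Suc k<..n}" using assms by auto
  show "ymax n (Suc k) \<omega> \<le> ymax n k \<omega>"
  proof (cases "{Suc k<..n} = {}")
    case True then show ?thesis using assms by (auto simp: ymax_def Max_ge_iff)
  next
    case False then show ?thesis unfolding ymax_def sp by (simp add: Max_insert)
  qed
  show "ymax n k \<omega> \<le> max (\<omega> (Suc k)) (ymax n (Suc k) \<omega>)"
  proof (cases "{Suc k<..n} = {}")
    case True then show ?thesis unfolding ymax_def sp by simp
  next
    case False then show ?thesis unfolding ymax_def sp by (simp add: Max_insert)
  qed
qed


lemma max_aux: fixes y a b c :: real
  assumes "y \<le> max a b" shows "max 0 (y - c) \<le> max 0 (a - c) + max 0 (b - c)"
  using assms unfolding max_def by (smt (verit))

context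
  fixes F :: "nat \<Rightarrow> real measure" and n :: nat
  assumes prob: "\<And>s. s \<in> {1..n} \<Longrightarrow> prob_space (F s)"
    and borel: "\<And>s. s \<in> {1..n} \<Longrightarrow> sets (F s) = sets borel"
    and nonneg: "\<And>s. s \<in> {1..n} \<Longrightarrow> AE x in F s. 0 \<le> x"
    and finexp: "\<And>s. s \<in> {1..n} \<Longrightarrow> integrable (F s) (\<lambda>x. x)"
begin

lemma ps: "prob_space (joint F n)"
  unfolding joint_def by (rule prob_space_PiM) (rule prob)

lemma coord_meas: "s \<in> {1..n} \<Longrightarrow> (\<lambda>\<omega>. \<omega> s) \<in> borel_measurable (joint F n)"
proof -
  assume s: "s \<in> {1..n}"
  have "(\<lambda>\<omega>. \<omega> s) \<in> measurable (joint F n) (F s)"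
    unfolding joint_def by (rule measurable_component_singleton) (use s in auto)
  also have "measurable (joint F n) (F s) = borel_measurable (joint F n)"
    by (rule measurable_cong_sets) (use borel[OF s] in auto)
  finally show ?thesis .
qed

lemma coord_int: "s \<in> {1..n} \<Longrightarrow> integrable (joint F n) (\<lambda>\<omega>. \<omega> s)"
proof -
  assume s: "s \<in> {1..n}"
  have m: "(\<lambda>\<omega>. \<omega> s) \<in> measurable (joint F n) (F s)"
    unfolding joint_def by (rule measurable_component_singleton) (use s in auto)
  have mid: "(\<lambda>x::real. x) \<in> borel_measurable (F s)"
    using borel[OF s] by (simp add: measurable_cong_sets[OF _ refl, of "F s" borel])
  have "integrable (distr (joint F n) (F s) (\<lambda>\<omega>. \<omega> s)) (\<lambda>x. x)"
    unfolding joint_def using distr_PiM_component[of "{1..n}" F s] prob s finexp[OF s] by simp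
  then show ?thesis using integrable_distr_eq[OF m mid] by simp
qed

lemma AE_nonneg_all: "AE \<omega> in joint F n. \<forall>s\<in>{1..n}. 0 \<le> \<omega> s"
  unfolding joint_def
proof (rule AE_finite_allI)
  fix s assume s: "s \<in> {1..n}"
  show "AE \<omega> in PiM {1..n} F. 0 \<le> \<omega> s"
    by (rule AE_PiM_component[of "{1..n}" F s "\<lambda>x. 0 \<le> x"]) (use s prob nonneg in auto)
qed simp

lemma sum_abs_int: assumes "{a..b} \<subseteq> {1..n}" shows "integrable (joint F n) (\<lambda>\<omega>. \<Sum>s\<in>{a..b}. \<bar>\<omega> s\<bar>)"
proof (rule Bochner_Integration.integrable_sum)
  fix s assume "s \<in> {a..b}"
  then have "s \<in> {1..n}" using assms by auto
  then show "integrable (joint F n) (\<lambda>\<omega>. \<bar>\<omega> s\<bar>)" by (intro integrable_abs coord_int)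
qed

lemma ymax_int: "integrable (joint F n) (ymax n k)"
proof (rule Bochner_Integration.integrable_bound[OF sum_abs_int[of "Suc k" n]])
  show "{Suc k..n} \<subseteq> {1..n}" by auto
  show "ymax n k \<in> borel_measurable (joint F n)"
    by (rule ymax_meas) (intro coord_meas, auto)
  show "AE x in joint F n. norm (ymax n k x) \<le> norm (\<Sum>s\<in>{Suc k..n}. \<bar>x s\<bar>)"
  proof (rule AE_I2)
    fix x :: "nat \<Rightarrow> real"
    have e: "{k<..n} = {Suc k..n}" by auto
    have "0 \<le> (\<Sum>s\<in>{Suc k..n}. \<bar>x s\<bar>)" by (simp add: sum_nonneg)
    then show "norm (ymax n k x) \<le> norm (\<Sum>s\<in>{Suc k..n}. \<bar>x s\<bar>)"
      using ymax_bound[of n k x] unfolding e by simp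
  qed
qed

lemma alg_int: "1 \<le> k \<Longrightarrow> integrable (joint F n) (alg_reward F n k)"
proof (rule Bochner_Integration.integrable_bound[OF sum_abs_int[of k n]])
  assume k: "1 \<le> k"
  show "{k..n} \<subseteq> {1..n}" using k by auto
  show "alg_reward F n k \<in> borel_measurable (joint F n)"
    by (rule alg_meas) (intro coord_meas, use k in auto)
  show "AE x in joint F n. norm (alg_reward F n k x) \<le> norm (\<Sum>s\<in>{k..n}. \<bar>x s\<bar>)"
  proof (rule AE_I2)
    fix x :: "nat \<Rightarrow> real"
    have "0 \<le> (\<Sum>s\<in>{k..n}. \<bar>x s\<bar>)" by (simp add: sum_nonneg)
    then show "norm (alg_reward F n k x) \<le> norm (\<Sum>s\<in>{k..n}. \<bar>x s\<bar>)"
      using alg_bound[of F n k x] by simp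
  qed
qed

definition G :: "nat \<Rightarrow> real \<Rightarrow> real" where
  "G k x = (\<integral>\<omega>. max 0 (ymax n k \<omega> - phi * x) \<partial>joint F n)"

lemma G_int: "integrable (joint F n) (\<lambda>\<omega>. max 0 (ymax n k \<omega> - phi * x))"
proof -
  interpret prob_space "joint F n" by (rule ps)
  show ?thesis by (intro integrable_max Bochner_Integration.integrable_diff ymax_int) auto
qed

lemma G_anti: assumes "x \<le> x'" shows "G k x' \<le> G k x"
proof -
  have "phi * x \<le> phi * x'" using phi_ge1 assms by (simp add: mult_left_mono)
  then show ?thesis
    unfolding G_def by (intro integral_mono[OF G_int G_int] max.mono) auto
qed

lemma G_nonneg: "0 \<le> G k x"
  unfolding G_def by (rule integral_nonneg_AE) auto

lemma G_lip: "G k x \<le> G k x' + phi * \<bar>x - x'\<bar>"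
proof -
  interpret prob_space "joint F n" by (rule ps)
  have "G k x \<le> (\<integral>\<omega>. max 0 (ymax n k \<omega> - phi * x') + phi * \<bar>x - x'\<bar> \<partial>joint F n)"
    unfolding G_def
  proof (rule integral_mono[OF G_int])
    show "integrable (joint F n) (\<lambda>\<omega>. max 0 (ymax n k \<omega> - phi * x') + phi * \<bar>x - x'\<bar>)"
      by (intro Bochner_Integration.integrable_add G_int) auto
    fix \<omega>
    have "phi * x' \<le> phi * x + phi * \<bar>x - x'\<bar>"
      using phi_ge1 by (simp add: algebra_simps abs_if)
    then show "max 0 (ymax n k \<omega> - phi * x) \<le> max 0 (ymax n k \<omega> - phi * x') + phi * \<bar>x - x'\<bar>"
      using phi_ge1 by (auto simp: max_def)
  qed
  also have "\<dots> = G k x' + phi * \<bar>x - x'\<bar>"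
    unfolding G_def by (subst Bochner_Integration.integral_add[OF G_int]) (auto simp: prob_space)
  finally show ?thesis .
qed

lemma G_cont: "continuous_on A (\<lambda>x. G k x - x)"
proof -
  have "continuous_on A (G k)"
    unfolding continuous_on_iff
  proof (intro ballI allI impI)
    fix x e :: real assume "0 < e"
    show "\<exists>d>0. \<forall>x'\<in>A. dist x' x < d \<longrightarrow> dist (G k x') (G k x) < e"
    proof (intro exI[of _ "e / phi"] conjI ballI impI)
      show "0 < e / phi" using \<open>0 < e\<close> phi_ge1 by simp
      fix x' assume "dist x' x < e / phi"
      then have "phi * \<bar>x' - x\<bar> < e" using phi_ge1 by (simp add: dist_real_def field_simps)
      moreover have "G k x' \<le> G k x + phi * \<bar>x' - x\<bar>" by (rule G_lip)
      moreover have "G k x \<le> G k x' + phi * \<bar>x - x'\<bar>" by (rule G_lip)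
      ultimately show "dist (G k x') (G k x) < e" by (simp add: dist_real_def abs_minus_commute)
    qed
  qed
  then show ?thesis by (intro continuous_intros)
qed

lemma beta_ex1: "\<exists>!x. 0 \<le> x \<and> G k x = x"
proof (rule ex_ex1I)
  have "\<exists>x. 0 \<le> x \<and> x \<le> G k 0 \<and> G k x - x = 0"
  proof (rule IVT2')
    show "G k (G k 0) - G k 0 \<le> 0" using G_anti[of 0 "G k 0" k] G_nonneg by simp
    show "0 \<le> G k 0 - 0" using G_nonneg by simp
    show "0 \<le> G k 0" using G_nonneg by simp
    show "continuous_on {0..G k 0} (\<lambda>x. G k x - x)" by (rule G_cont)
  qed
  then show "\<exists>x. 0 \<le> x \<and> G k x = x" by auto
next
  fix x y assume x: "0 \<le> x \<and> G k x = x" and y: "0 \<le> y \<and> G k y = y"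
  show "x = y"
  proof (rule ccontr)
    assume "x \<noteq> y"
    then consider "x < y" | "y < x" by linarith
    then show False
    proof cases
      case 1 then show False using G_anti[of x y k] x y by simp
    next
      case 2 then show False using G_anti[of y x k] x y by simp
    qed
  qed
qed

lemma beta_eq: "0 \<le> beta F n k" "G k (beta F n k) = beta F n k"
proof -
  have "0 \<le> beta F n k \<and> G k (beta F n k) = beta F n k"
    unfolding beta_def using theI'[OF beta_ex1[of k]] unfolding G_def by simp
  then show "0 \<le> beta F n k" "G k (beta F n k) = beta F n k" by auto
qed

lemma beta_le: "G k x \<le> x \<Longrightarrow> beta F n k \<le> x"
proof (rule ccontr)
  assume a: "G k x \<le> x" "\<not> beta F n k \<le> x"
  then have "G k (beta F n k) \<le> G k x" by (intro G_anti) simp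
  then show False using a beta_eq[of k] by simp
qed

lemma beta_ge: "x \<le> G k x \<Longrightarrow> x \<le> beta F n k"
proof (rule ccontr)
  assume a: "x \<le> G k x" "\<not> x \<le> beta F n k"
  then have "G k x \<le> G k (beta F n k)" by (intro G_anti) simp
  then show False using a beta_eq[of k] by simp
qed

lemma claim2: "Ey F n k / phi\<^sup>2 \<le> beta F n k"
proof (rule beta_ge)
  interpret prob_space "joint F n" by (rule ps)
  let ?x = "Ey F n k / phi\<^sup>2"
  have "Ey F n k - phi * ?x = (\<integral>\<omega>. ymax n k \<omega> - phi * ?x \<partial>joint F n)"
    unfolding Ey_def by (subst Bochner_Integration.integral_diff[OF ymax_int]) (auto simp: prob_space)
  also have "\<dots> \<le> G k ?x"
    unfolding G_def by (rule integral_mono[OF _ G_int]) (auto intro: ymax_int)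
  finally have "Ey F n k - phi * ?x \<le> G k ?x" .
  moreover have "Ey F n k - phi * ?x = ?x"
  proof -
    have p: "phi \<noteq> 0" using phi_ge1 by simp
    have "Ey F n k - phi * ?x = Ey F n k * (phi\<^sup>2 - phi) / phi\<^sup>2"
      using p by (simp add: field_simps power2_eq_square)
    then show ?thesis using phi_sq by simp
  qed
  ultimately show "?x \<le> G k ?x" by simp
qed


lemma indep_coords: assumes "1 \<le> n"
  shows "prob_space.indep_vars (joint F n) (\<lambda>_. borel) (\<lambda>i \<omega>. \<omega> i) {1..n}"
proof -
  interpret prob_space "joint F n" by (rule ps)
  have l: "distr (joint F n) (PiM {1..n} (\<lambda>_. borel)) (\<lambda>x. \<lambda>i\<in>{1..n}. x i) = joint F n"
  proof -
    have "distr (joint F n) (PiM {1..n} (\<lambda>_. borel)) (\<lambda>x. \<lambda>i\<in>{1..n}. x i)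
        = distr (joint F n) (joint F n) (\<lambda>x. x)"
    proof (rule distr_cong)
      show "sets (PiM {1..n} (\<lambda>_. borel)) = sets (joint F n)"
        unfolding joint_def by (rule sets_PiM_cong) (use borel in auto)
      fix x assume "x \<in> space (joint F n)"
      then have "x \<in> PiE {1..n} (\<lambda>i. space (F i))" unfolding joint_def by (simp add: space_PiM)
      then show "(\<lambda>i\<in>{1..n}. x i) = x" by (simp add: restrict_PiE)
    qed simp
    then show ?thesis by simp
  qed
  have r: "PiM {1..n} (\<lambda>i. distr (joint F n) borel (\<lambda>x. x i)) = joint F n"
    unfolding joint_def
  proof (rule PiM_cong)
    fix i assume i: "i \<in> {1..n}"
    have "distr (PiM {1..n} F) borel (\<lambda>x. x i) = distr (PiM {1..n} F) (F i) (\<lambda>x. x i)"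
      by (rule distr_cong) (use borel[OF i] in auto)
    also have "\<dots> = F i" by (rule distr_PiM_component) (use prob i in auto)
    finally show "distr (PiM {1..n} F) borel (\<lambda>x. x i) = F i" .
  qed simp
  show ?thesis
    by (subst indep_vars_iff_distr_eq_PiM') (use assms coord_meas l r in auto)
qed

lemma G_mono_step: assumes "k < n" shows "G (Suc k) x \<le> G k x"
  unfolding G_def
proof (rule integral_mono_AE[OF G_int G_int])
  show "AE \<omega> in joint F n. max 0 (ymax n (Suc k) \<omega> - phi * x) \<le> max 0 (ymax n k \<omega> - phi * x)"
    using AE_nonneg_all
  proof eventually_elim
    case (elim \<omega>)
    then have "ymax n (Suc k) \<omega> \<le> ymax n k \<omega>" by (intro ymax_step(1)[OF assms]) auto
    then show ?case by (intro max.mono) auto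
  qed
qed

lemma Ey_mono: assumes "k < n" shows "Ey F n (Suc k) \<le> Ey F n k"
  unfolding Ey_def
proof (rule integral_mono_AE[OF ymax_int ymax_int])
  show "AE \<omega> in joint F n. ymax n (Suc k) \<omega> \<le> ymax n k \<omega>"
    using AE_nonneg_all by eventually_elim (intro ymax_step(1)[OF assms], auto)
qed

lemma vplus_int: assumes "s \<in> {1..n}" shows "integrable (joint F n) (\<lambda>\<omega>. max 0 (\<omega> s - c))"
proof -
  interpret prob_space "joint F n" by (rule ps)
  show ?thesis by (intro integrable_max Bochner_Integration.integrable_diff coord_int assms) auto
qed

lemma G_split: assumes "k < n"
  shows "G k x \<le> (\<integral>\<omega>. max 0 (\<omega> (Suc k) - phi * x) \<partial>joint F n) + G (Suc k) x"
proof -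
  have s: "Suc k \<in> {1..n}" using assms by auto
  have "G k x \<le> (\<integral>\<omega>. max 0 (\<omega> (Suc k) - phi * x) + max 0 (ymax n (Suc k) \<omega> - phi * x) \<partial>joint F n)"
    unfolding G_def
  proof (rule integral_mono_AE[OF G_int])
    show "integrable (joint F n) (\<lambda>\<omega>. max 0 (\<omega> (Suc k) - phi * x) + max 0 (ymax n (Suc k) \<omega> - phi * x))"
      by (intro Bochner_Integration.integrable_add G_int vplus_int s)
    show "AE \<omega> in joint F n. max 0 (ymax n k \<omega> - phi * x) \<le> max 0 (\<omega> (Suc k) - phi * x) + max 0 (ymax n (Suc k) \<omega> - phi * x)"
      using AE_nonneg_all
    proof eventually_elim
      case (elim \<omega>)
      then have "ymax n k \<omega> \<le> max (\<omega> (Suc k)) (ymax n (Suc k) \<omega>)" by (intro ymax_step(2)[OF assms]) auto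
      then show ?case by (rule max_aux)
    qed
  qed
  also have "\<dots> = (\<integral>\<omega>. max 0 (\<omega> (Suc k) - phi * x) \<partial>joint F n) + G (Suc k) x"
    unfolding G_def by (rule Bochner_Integration.integral_add[OF vplus_int[OF s] G_int])
  finally show ?thesis .
qed

lemma beta_top: "beta F n n = 0"
proof -
  have "G n 0 = 0" unfolding G_def ymax_def by simp
  then have "beta F n n \<le> 0" by (intro beta_le) simp
  then show ?thesis using beta_eq(1)[of n] by simp
qed

lemma ALG_top: "ALG F n (Suc n) = 0"
proof -
  have "alg_reward F n (Suc n) = (\<lambda>_. 0)" by (rule ext) (simp add: alg_gt)
  then show ?thesis unfolding ALG_def by simp
qed


definition I0 :: "nat \<Rightarrow> (nat \<Rightarrow> real) \<Rightarrow> real" where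
  "I0 k \<omega> = (if tau F n (Suc k) \<le> \<omega> (Suc k) then 0 else 1)"

lemma I0_meas: "k < n \<Longrightarrow> I0 k \<in> borel_measurable (joint F n)"
proof -
  assume "k < n"
  then have m[measurable]: "(\<lambda>\<omega>. \<omega> (Suc k)) \<in> borel_measurable (joint F n)" by (intro coord_meas) auto
  show ?thesis unfolding I0_def[abs_def] by measurable
qed

lemma I0_int: "k < n \<Longrightarrow> integrable (joint F n) (I0 k)"
proof -
  assume k: "k < n"
  interpret prob_space "joint F n" by (rule ps)
  show ?thesis
  proof (rule Bochner_Integration.integrable_bound[of _ "\<lambda>_. 1::real"])
    show "integrable (joint F n) (\<lambda>_. 1::real)" by simp
    show "I0 k \<in> borel_measurable (joint F n)" using k by (rule I0_meas)
    show "AE x in joint F n. norm (I0 k x) \<le> norm (1::real)" by (auto simp: I0_def)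
  qed
qed

lemma indep_step: assumes k: "k < n"
  shows "(\<integral>\<omega>. I0 k \<omega> * alg_reward F n (Suc (Suc k)) \<omega> \<partial>joint F n)
       = (\<integral>\<omega>. I0 k \<omega> \<partial>joint F n) * ALG F n (Suc (Suc k))"
proof -
  interpret prob_space "joint F n" by (rule ps)
  let ?B = "{Suc (Suc k)..n}"
  have ind: "indep_vars (\<lambda>_. borel) (\<lambda>i \<omega>. \<omega> i) {1..n}" using k by (intro indep_coords) auto
  have iv: "indep_var (PiM {Suc k} (\<lambda>_. borel)) (\<lambda>\<omega>. restrict (\<lambda>i. \<omega> i) {Suc k})
                      (PiM ?B (\<lambda>_. borel)) (\<lambda>\<omega>. restrict (\<lambda>i. \<omega> i) ?B)"
    by (rule indep_var_restrict[OF ind]) (use k in auto)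
  define Y1 where "Y1 = (\<lambda>x::nat\<Rightarrow>real. if tau F n (Suc k) \<le> x (Suc k) then 0 else (1::real))"
  have c1[measurable]: "(\<lambda>x. x (Suc k)) \<in> borel_measurable (PiM {Suc k} (\<lambda>_. borel::real measure))"
    using measurable_component_singleton[of "Suc k" "{Suc k}" "\<lambda>_. borel::real measure"] by simp
  have Y1m: "Y1 \<in> borel_measurable (PiM {Suc k} (\<lambda>_. borel))"
    unfolding Y1_def by measurable
  have Y2m: "alg_reward F n (Suc (Suc k)) \<in> borel_measurable (PiM ?B (\<lambda>_. borel))"
  proof (rule alg_meas)
    fix s assume "s \<in> {Suc (Suc k)..n}"
    then show "(\<lambda>\<omega>. \<omega> s) \<in> borel_measurable (PiM ?B (\<lambda>_. borel))"
      using measurable_component_singleton[of s ?B "\<lambda>_. borel::real measure"] by simp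
  qed
  note iv2 = indep_var_compose[OF iv Y1m Y2m]
  have e1: "Y1 \<circ> (\<lambda>\<omega>. restrict (\<lambda>i. \<omega> i) {Suc k}) = I0 k"
    by (rule ext) (simp add: Y1_def I0_def)
  have e2: "alg_reward F n (Suc (Suc k)) \<circ> (\<lambda>\<omega>. restrict (\<lambda>i. \<omega> i) ?B) = alg_reward F n (Suc (Suc k))"
    by (rule ext) (auto intro: alg_local)
  have iv3: "indep_var borel (I0 k) borel (alg_reward F n (Suc (Suc k)))"
    using iv2 unfolding e1 e2 .
  show ?thesis unfolding ALG_def
    by (rule indep_var_lebesgue_integral[OF iv3 I0_int[OF k] alg_int]) simp
qed

lemma ALG_decomp: assumes k: "k < n"
  shows "ALG F n (Suc k) = tau F n (Suc k) * (1 - (\<integral>\<omega>. I0 k \<omega> \<partial>joint F n))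
     + (\<integral>\<omega>. max 0 (\<omega> (Suc k) - tau F n (Suc k)) \<partial>joint F n)
     + (\<integral>\<omega>. I0 k \<omega> \<partial>joint F n) * ALG F n (Suc (Suc k))"
proof -
  interpret prob_space "joint F n" by (rule ps)
  let ?t = "tau F n (Suc k)"
  have s: "Suc k \<in> {1..n}" using k by auto
  have pw: "alg_reward F n (Suc k) \<omega> = (?t - ?t * I0 k \<omega> + max 0 (\<omega> (Suc k) - ?t))
       + I0 k \<omega> * alg_reward F n (Suc (Suc k)) \<omega>" for \<omega>
    using k by (simp add: alg_rec[of "Suc k" n] I0_def)
  have i1: "integrable (joint F n) (\<lambda>\<omega>. ?t - ?t * I0 k \<omega>)"
    using I0_int[OF k] by (intro Bochner_Integration.integrable_diff) auto
  have i2: "integrable (joint F n) (\<lambda>\<omega>. I0 k \<omega> * alg_reward F n (Suc (Suc k)) \<omega>)"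
  proof -
    interpret prob_space "joint F n" by (rule ps)
    show ?thesis
    proof (rule Bochner_Integration.integrable_bound[OF integrable_abs[OF alg_int[of "Suc (Suc k)"]]])
      show "(\<lambda>\<omega>. I0 k \<omega> * alg_reward F n (Suc (Suc k)) \<omega>) \<in> borel_measurable (joint F n)"
        using I0_meas[OF k] alg_int[of "Suc (Suc k)"] by (auto intro!: borel_measurable_times)
      show "AE x in joint F n. norm (I0 k x * alg_reward F n (Suc (Suc k)) x) \<le> norm \<bar>alg_reward F n (Suc (Suc k)) x\<bar>"
        by (auto simp: I0_def)
    qed simp
  qed
  have "ALG F n (Suc k) = (\<integral>\<omega>. (?t - ?t * I0 k \<omega> + max 0 (\<omega> (Suc k) - ?t))
       + I0 k \<omega> * alg_reward F n (Suc (Suc k)) \<omega> \<partial>joint F n)"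
    unfolding ALG_def pw ..
  also have "\<dots> = (\<integral>\<omega>. ?t - ?t * I0 k \<omega> \<partial>joint F n) + (\<integral>\<omega>. max 0 (\<omega> (Suc k) - ?t) \<partial>joint F n)
       + (\<integral>\<omega>. I0 k \<omega> * alg_reward F n (Suc (Suc k)) \<omega> \<partial>joint F n)"
    using i1 i2 vplus_int[OF s]
    by (simp add: Bochner_Integration.integral_add Bochner_Integration.integrable_add)
  also have "(\<integral>\<omega>. ?t - ?t * I0 k \<omega> \<partial>joint F n) = ?t * (1 - (\<integral>\<omega>. I0 k \<omega> \<partial>joint F n))"
    using I0_int[OF k] by (simp add: Bochner_Integration.integral_diff prob_space right_diff_distrib)
  finally show ?thesis using indep_step[OF k] by simp
qed


lemma main_ind: "k \<le> n \<Longrightarrow> beta F n k \<le> ALG F n (Suc k)"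
proof (induction "n - k" arbitrary: k)
  case 0
  then have "k = n" by simp
  then show ?case using beta_top ALG_top by simp
next
  case (Suc d)
  then have k: "k < n" by simp
  have IH: "beta F n (Suc k) \<le> ALG F n (Suc (Suc k))" using Suc k by simp
  interpret prob_space "joint F n" by (rule ps)
  have s: "Suc k \<in> {1..n}" using k by auto
  define b where "b = beta F n k"
  define b' where "b' = beta F n (Suc k)"
  define t where "t = tau F n (Suc k)"
  define A where "A = ALG F n (Suc (Suc k))"
  define p where "p = (\<integral>\<omega>. I0 k \<omega> \<partial>joint F n)"
  define E1 where "E1 = (\<integral>\<omega>. max 0 (\<omega> (Suc k) - t) \<partial>joint F n)"
  define E2 where "E2 = (\<integral>\<omega>. max 0 (\<omega> (Suc k) - phi * b) \<partial>joint F n)"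
  have p0: "0 \<le> p" unfolding p_def by (rule integral_nonneg_AE) (auto simp: I0_def)
  have p1: "p \<le> 1"
  proof -
    have "p \<le> (\<integral>\<omega>. 1 \<partial>joint F n)" unfolding p_def
      by (rule integral_mono[OF I0_int[OF k]]) (auto simp: I0_def)
    then show ?thesis by (simp add: prob_space)
  qed
  have b0: "0 \<le> b" unfolding b_def by (rule beta_eq)
  have bb: "b' \<le> b"
  proof -
    have "G (Suc k) b \<le> G k b" by (rule G_mono_step[OF k])
    also have "\<dots> = b" unfolding b_def by (rule beta_eq)
    finally show ?thesis unfolding b'_def by (rule beta_le)
  qed
  have tb': "b' \<le> t" unfolding t_def b'_def tau_def by simp
  have tphi: "t \<le> phi * b"
  proof -
    have c2: "Ey F n k / phi\<^sup>2 \<le> b" unfolding b_def by (rule claim2)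
    have pp: "0 < phi" using phi_ge1 by simp
    have "alpha F n (Suc k) \<le> Ey F n k / phi"
      unfolding alpha_def using Ey_mono[OF k] pp by (simp add: divide_right_mono)
    also have "Ey F n k / phi = phi * (Ey F n k / phi\<^sup>2)" using pp by (simp add: power2_eq_square field_simps)
    also have "\<dots> \<le> phi * b" using mult_left_mono[OF c2, of phi] pp by simp
    finally have "alpha F n (Suc k) \<le> phi * b" .
    moreover have "b' \<le> phi * b" using bb b0 phi_ge1
      by (smt (verit, best) mult_le_cancel_right1 mult.commute)
    ultimately show ?thesis unfolding t_def tau_def b'_def by simp
  qed
  have E12: "E2 \<le> E1" unfolding E1_def E2_def
    by (rule integral_mono[OF vplus_int[OF s] vplus_int[OF s]]) (use tphi in \<open>auto intro: max.mono\<close>)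
  have bE: "b \<le> E2 + b'"
  proof -
    have "b = G k b" unfolding b_def using beta_eq by simp
    also have "\<dots> \<le> E2 + G (Suc k) b" unfolding E2_def by (rule G_split[OF k])
    also have "G (Suc k) b \<le> G (Suc k) b'" by (rule G_anti[OF bb])
    also have "G (Suc k) b' = b'" unfolding b'_def by (rule beta_eq)
    finally show ?thesis by simp
  qed
  have dec: "ALG F n (Suc k) = t * (1 - p) + E1 + p * A"
    unfolding t_def p_def E1_def A_def by (rule ALG_decomp[OF k])
  have "b' \<le> t * (1 - p) + p * A"
  proof -
    have "0 \<le> (1 - p) * (t - b')" using p1 tb' by simp
    moreover have "0 \<le> p * (A - b')" using p0 IH unfolding A_def b'_def by simp
    ultimately show ?thesis by (simp add: algebra_simps)
  qed
  then show ?case using dec E12 bE unfolding b_def by linarith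
qed

end

theorem lemma3p2:
  fixes F :: "nat \<Rightarrow> real measure" and n t :: nat
  assumes prob: "\<And>s. s \<in> {1..n} \<Longrightarrow> prob_space (F s)"
    and borel: "\<And>s. s \<in> {1..n} \<Longrightarrow> sets (F s) = sets borel"
    and nonneg: "\<And>s. s \<in> {1..n} \<Longrightarrow> AE x in F s. 0 \<le> x"
    and finexp: "\<And>s. s \<in> {1..n} \<Longrightarrow> integrable (F s) (\<lambda>x. x)"
    and t: "1 \<le> t" "t \<le> n - 1"
  shows "ALG F n (t + 1) \<ge> beta F n t
       \<and> beta F n t \<ge> Ey F n t / phi\<^sup>2
       \<and> Ey F n t / phi\<^sup>2 = alpha F n t / phi"
proof (intro conjI)
  have tn: "t \<le> n" using t by simp
  show "beta F n t \<le> ALG F n (t + 1)"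
    using main_ind[OF prob borel nonneg finexp tn] by simp
  show "Ey F n t / phi\<^sup>2 \<le> beta F n t"
    by (rule claim2[OF prob borel nonneg finexp])
  show "Ey F n t / phi\<^sup>2 = alpha F n t / phi"
    unfolding alpha_def by (simp add: power2_eq_square)
qed

end
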